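(* Fix $k\in\mathbb{N}$, $q\in(0,1)$, $s=q^{-1/2}$ and $u>s$. Let $\lambda\in\mathsf{Sign}_k^+$ with $\lambda_1>\lambda_2>\dots>\lambda_k$. If $\pi\in\mathcal{P}_{\lambda/\varnothing}$ is typical, then $$\mathcal{W}(\pi)=\left(\frac{1-q}{1-su}\right)^{\binom{k+1}{2}}\left(\frac{(1-q^{-1})u}{1-su}\right)^{\binom{k}{2}}\left(\frac{u-s}{1-su}\right)^{|\lambda|-\binom{k}{2}},$$ where $|\lambda|=\lambda_1+\dots+\lambda_k$.
   Context: $\mathsf{Sign}_k^+$ is the set of $\lambda=(\lambda_1\ge\dots\ge\lambda_k)$ with $\lambda_i\in\mathbb{Z}_{\ge0}$. A vertex has type $(i_1,j_1;i_2,j_2)$ if $i_1$ (resp. $j_1$) paths enter from below (resp. the left) and $i_2$ (resp. $j_2$) leave upward (resp. right). Weights with spectral parameter $z$ ($g\in\mathbb{Z}_{\ge0}$; all other types weight $0$): $w_z(g,0;g,0)=\frac{1-sq^gz}{1-sz}$, $w_z(g+1,0;g,1)=\frac{(1-s^2q^g)z}{1-sz}$, $w_z(g,1;g,1)=\frac{z-sq^g}{1-sz}$, $w_z(g,1;g+1,0)=\frac{1-q^{g+1}}{1-sz}$. For $\lambda\in\mathsf{Sign}_k^+$, $\mathcal{P}_{\lambda/\varnothing}$ is the set of collections of up-right paths in $\mathbb{Z}_{\ge0}\times\{1,\dots,k\}$ with at most one path per horizontal edge (vertical edges may carry several), one path entering through $(-1,y)\to(0,y)$ for each $y=1,\dots,k$,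 none entering from the bottom, and paths exiting at the top through $(\lambda_i,k)\to(\lambda_i,k+1)$, $i=1,\dots,k$. For such $\pi$, $\mathcal{W}(\pi)=\prod_{(x,y)}w_u(\text{type of }(x,y))$. A path collection $\pi\in\mathcal{P}_{\lambda/\varnothing}$ (with $\lambda$ strictly decreasing) is typical if every vertex of $\pi$ has one of the types $(0,0;0,0)$, $(0,1;0,1)$, $(0,1;1,0)$, $(1,0;0,1)$. *)

theory Defs
  imports Complex_Main
begin

definition Sign_plus :: "nat \<Rightarrow> nat list set" where
  "Sign_plus k = {lam. length lam = k \<and> sorted_wrt (\<ge>) lam}"

text \<open>Vertex weight w_z(i1,j1;i2,j2): i1 paths from below, j1 from the left,
  i2 leave upward, j2 leave to the right.\<close>
definition vweight :: "real \<Rightarrow> real \<Rightarrow> real \<Rightarrow> nat \<Rightarrow> nat \<Rightarrow> nat \<Rightarrow> nat \<Rightarrow> real" where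
  "vweight q s z i1 j1 i2 j2 =
     (if j1 = 0 \<and> j2 = 0 \<and> i1 = i2 then (1 - s * q ^ i1 * z) / (1 - s * z)
      else if j1 = 0 \<and> j2 = 1 \<and> i1 = Suc i2 then (1 - s ^ 2 * q ^ i2) * z / (1 - s * z)
      else if j1 = 1 \<and> j2 = 1 \<and> i1 = i2 then (z - s * q ^ i1) / (1 - s * z)
      else if j1 = 1 \<and> j2 = 0 \<and> i2 = Suc i1 then (1 - q ^ (Suc i1)) / (1 - s * z)
      else 0)"

text \<open>A path collection is encoded by edge occupation numbers:
  h x y = number of paths on the horizontal edge (x-1,y) \<rightarrow> (x,y) (x = 0 is the
  incoming boundary edge (-1,y) \<rightarrow> (0,y));
  v x y = number of paths on the vertical edge (x,y-1) \<rightarrow> (x,y)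
  (y = 1 is the bottom boundary, y = k+1 the top boundary).
  The vertex (x,y) has type (v x y, h x y; v x (y+1), h (x+1) y).\<close>
type_synonym pathcoll = "(nat \<Rightarrow> nat \<Rightarrow> nat) \<times> (nat \<Rightarrow> nat \<Rightarrow> nat)"

definition vertices_nonempty :: "nat \<Rightarrow> pathcoll \<Rightarrow> (nat \<times> nat) set" where
  "vertices_nonempty k P = (case P of (h, v) \<Rightarrow>
     {(x, y). y \<in> {1..k} \<and> (v x y \<noteq> 0 \<or> h x y \<noteq> 0 \<or> v x (Suc y) \<noteq> 0 \<or> h (Suc x) y \<noteq> 0)})"

definition P_lam :: "nat \<Rightarrow> nat list \<Rightarrow> pathcoll set" where
  "P_lam k lam = {(h, v).
      (\<forall>x y. h x y \<le> 1) \<and>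
      (\<forall>y \<in> {1..k}. h 0 y = 1) \<and>
      (\<forall>x. v x 1 = 0) \<and>
      (\<forall>x. v x (Suc k) = card {i. i < k \<and> lam ! i = x}) \<and>
      (\<forall>x. \<forall>y \<in> {1..k}. v x y + h x y = v x (Suc y) + h (Suc x) y) \<and>
      finite {(x, y). y \<in> {1..k} \<and> (h x y \<noteq> 0 \<or> v x y \<noteq> 0)}}"

text \<open>Weight of a path collection: product of vertex weights over all vertices;
  empty vertices (type (0,0;0,0)) have weight (1 - s z)/(1 - s z), which is 1 whenever
  1 - s z \<noteq> 0, so only nonempty vertices are multiplied.\<close>
definition Wt :: "real \<Rightarrow> real \<Rightarrow> real \<Rightarrow> nat \<Rightarrow> pathcoll \<Rightarrow> real" where
  "Wt q s u k P = (case P of (h, v) \<Rightarrow>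
     (\<Prod>(x, y) \<in> vertices_nonempty k P. vweight q s u (v x y) (h x y) (v x (Suc y)) (h (Suc x) y)))"

definition typical :: "nat \<Rightarrow> pathcoll \<Rightarrow> bool" where
  "typical k P = (case P of (h, v) \<Rightarrow>
     (\<forall>x. \<forall>y \<in> {1..k}. (v x y, h x y, v x (Suc y), h (Suc x) y) \<in>
        {(0,0,0,0), (0,1,0,1), (0,1,1,0), (1,0,0,1)}))"

end

theory Submission imports Defs begin

lemma lam_sum:
  assumes "length lam = k" "\<forall>l\<in>set lam. l < N"
  shows "(\<Sum>x<N. x * card {i. i < k \<and> lam ! i = x}) = sum_list lam"
proof -
  have c: "card {i. i < k \<and> lam ! i = x} = (\<Sum>i<k. if lam ! i = x then 1 else 0)" for x
  proof -
    have "{i. i < k \<and> lam ! i = x} = {..<k} \<inter> {i. lam ! i = x}" by auto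
    thus ?thesis by (simp add: sum.If_cases)
  qed
  have "(\<Sum>x<N. x * card {i. i < k \<and> lam ! i = x}) = (\<Sum>x<N. \<Sum>i<k. if lam ! i = x then x else 0)"
    unfolding c by (simp add: sum_distrib_left if_distrib cong: if_cong)
  also have "\<dots> = (\<Sum>i<k. \<Sum>x<N. if lam ! i = x then x else 0)" by (rule sum.swap)
  also have "\<dots> = (\<Sum>i<k. lam ! i)"
  proof (rule sum.cong)
    fix i assume "i \<in> {..<k}"
    hence "lam ! i < N" using assms by auto
    thus "(\<Sum>x<N. if lam ! i = x then x else 0) = lam ! i" by (simp add: sum.delta)
  qed simp
  also have "\<dots> = sum_list lam" using assms(1) by (simp add: sum_list_sum_nth atLeast0LessThan)
  finally show ?thesis .
qed

lemma tri1: "(\<Sum>y\<in>{1..k}. y) = Suc k choose 2"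
  by (induction k) (auto simp: numeral_2_eq_2)

lemma tri2: "(\<Sum>y\<in>{1..k}. y - 1) = k choose 2"
  by (induction k) (auto simp: numeral_2_eq_2)

theorem lemma3p7:
  fixes k :: nat and q s u :: real and lam :: "nat list" and P :: pathcoll
  assumes "0 < q" "q < 1" "s = q powr (-1/2)" "u > s"
    and "lam \<in> Sign_plus k" "sorted_wrt (>) lam"
    and "P \<in> P_lam k lam" "typical k P"
  shows "Wt q s u k P =
     ((1 - q) / (1 - s * u)) ^ (Suc k choose 2)
   * ((1 - 1 / q) * u / (1 - s * u)) ^ (k choose 2)
   * ((u - s) / (1 - s * u)) powi (int (sum_list lam) - int (k choose 2))"
proof -
  obtain h v where P: "P = (h, v)" by (cases P)
  have hle: "\<And>x y. h x y \<le> 1" and h0: "\<And>y. y \<in> {1..k} \<Longrightarrow> h 0 y = 1"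
    and v1: "\<And>x. v x 1 = 0" and vtop: "\<And>x. v x (Suc k) = card {i. i < k \<and> lam ! i = x}"
    and cons: "\<And>x y. y \<in> {1..k} \<Longrightarrow> v x y + h x y = v x (Suc y) + h (Suc x) y"
    and fin: "finite {(x, y). y \<in> {1..k} \<and> (h x y \<noteq> 0 \<or> v x y \<noteq> 0)}"
    using assms(7) unfolding P P_lam_def by auto
  have typc: "\<And>x y. y \<in> {1..k} \<Longrightarrow> (v x y, h x y, v x (Suc y), h (Suc x) y) \<in>
        {(0,0,0,0), (0,1,0,1), (0,1,1,0), (1,0,0,1)}"
    using assms(8) unfolding P typical_def by auto
  have len: "length lam = k" using assms(5) by (simp add: Sign_plus_def)
  define S where "S = {(x, y). y \<in> {1..k} \<and> (h x y \<noteq> 0 \<or> v x y \<noteq> 0)}"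
  have "finite (fst ` S \<union> set lam)" using fin unfolding S_def by auto
  then obtain N0 where N0: "\<forall>n\<in>fst ` S \<union> set lam. n < N0"
    unfolding finite_nat_set_iff_bounded by blast
  have N: "\<And>n. n \<in> fst ` S \<union> set lam \<Longrightarrow> n < N0" using N0 by blast
  define N where "N = N0"
  note N = N[folded N_def]
  have hN: "h x y = 0" "v x y = 0" if "y \<in> {1..k}" "N \<le> x" for x y
  proof -
    have "(x, y) \<notin> S" using N[of x] that by force
    thus "h x y = 0" "v x y = 0" using that unfolding S_def by auto
  qed
  have vtopN: "v x (Suc k) = 0" if "N \<le> x" for x
  proof -
    have "{i. i < k \<and> lam ! i = x} = {}"
    proof (rule ccontr)
      assume "{i. i < k \<and> lam ! i = x} \<noteq> {}"
      then obtain i where "i < k" "lam ! i = x" by auto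
      hence "x \<in> set lam" using len by auto
      thus False using N[of x] that by auto
    qed
    thus ?thesis using vtop by simp
  qed
  have vSN: "v x (Suc y) = 0" if "y \<in> {1..k}" "N \<le> x" for x y
  proof (cases "y = k")
    case True thus ?thesis using vtopN that by simp
  next
    case False thus ?thesis using hN(2)[of "Suc y" x] that by auto
  qed
  define c1 where "c1 = (1 - q) / (1 - s * u)"
  define c2 where "c2 = (1 - 1 / q) * u / (1 - s * u)"
  define c3 where "c3 = (u - s) / (1 - s * u)"
  have s2: "s ^ 2 = 1 / q"
  proof -
    have "s ^ 2 = q powr (-1/2) * q powr (-1/2)" using assms(3) by (simp add: power2_eq_square)
    also have "\<dots> = q powr (-1)" by (simp add: powr_add[symmetric])
    also have "\<dots> = 1 / q" using assms(1) by (simp add: powr_minus inverse_eq_divide)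
    finally show ?thesis .
  qed
  have spos: "s > 0" using assms(1,3) by simp
  have s1: "s > 1"
  proof (rule ccontr)
    assume "\<not> s > 1"
    hence "s ^ 2 \<le> 1" using spos by (simp add: power_le_one)
    moreover have "1 / q > 1" using assms(1,2) by simp
    ultimately show False using s2 by simp
  qed
  have "1 < u" using s1 assms(4) by simp
  hence su: "s * u \<noteq> 1" using less_1_mult[OF s1] by force
  define g where "g = (\<lambda>(x::nat, y::nat). c1 ^ v x (Suc y) * c2 ^ v x y * c3 ^ (h x y * h (Suc x) y))"
  have wg: "vweight q s u (v x y) (h x y) (v x (Suc y)) (h (Suc x) y) = g (x, y)"
    if "y \<in> {1..k}" for x y
    using typc[OF that, of x]
  proof (elim insertE emptyE)
    assume "(v x y, h x y, v x (Suc y), h (Suc x) y) = (0,0,0,0)"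
    thus ?thesis unfolding g_def using su by (simp add: vweight_def)
  next
    assume "(v x y, h x y, v x (Suc y), h (Suc x) y) = (0,1,0,1)"
    thus ?thesis unfolding g_def c3_def by (simp add: vweight_def)
  next
    assume "(v x y, h x y, v x (Suc y), h (Suc x) y) = (0,1,1,0)"
    thus ?thesis unfolding g_def c1_def by (simp add: vweight_def)
  next
    assume "(v x y, h x y, v x (Suc y), h (Suc x) y) = (1,0,0,1)"
    thus ?thesis unfolding g_def c2_def using s2 by (simp add: vweight_def)
  qed
  have hsplit: "h (Suc x) y = h x y * h (Suc x) y + v x y" and vle: "v x y \<le> 1" "v x (Suc y) \<le> 1"
    if "y \<in> {1..k}" for x y
    using typc[OF that, of x] by auto
  define B where "B = {..<N} \<times> {1..k}"
  define F where "F = vertices_nonempty k P"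
  have FB: "F \<subseteq> B"
  proof
    fix p assume "p \<in> F"
    then obtain x y where p: "p = (x, y)" "y \<in> {1..k}"
      and nz: "v x y \<noteq> 0 \<or> h x y \<noteq> 0 \<or> v x (Suc y) \<noteq> 0 \<or> h (Suc x) y \<noteq> 0"
      unfolding F_def P vertices_nonempty_def by auto
    have "x < N"
    proof (rule ccontr)
      assume "\<not> x < N"
      thus False using nz hN[OF p(2)] vSN[OF p(2)] hN[OF p(2), of "Suc x"] by auto
    qed
    thus "p \<in> B" using p unfolding B_def by auto
  qed
  have Wt1: "Wt q s u k P = (\<Prod>p\<in>F. g p)"
    unfolding Wt_def P F_def[unfolded P] prod.case
    by (rule prod.cong) (auto simp: vertices_nonempty_def wg)
  also have "\<dots> = (\<Prod>p\<in>B. g p)"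
  proof (rule prod.mono_neutral_left)
    show "finite B" unfolding B_def by simp
    show "F \<subseteq> B" by (rule FB)
    show "\<forall>i\<in>B - F. g i = 1"
    proof
      fix p assume "p \<in> B - F"
      then obtain x y where p: "p = (x, y)" "y \<in> {1..k}" "(x,y) \<notin> F" unfolding B_def by auto
      hence "v x y = 0" "h x y = 0" "v x (Suc y) = 0" "h (Suc x) y = 0"
        unfolding F_def P vertices_nonempty_def by auto
      thus "g p = 1" unfolding g_def p by simp
    qed
  qed
  also have "\<dots> = c1 ^ (\<Sum>(x,y)\<in>B. v x (Suc y)) * c2 ^ (\<Sum>(x,y)\<in>B. v x y)
      * c3 ^ (\<Sum>(x,y)\<in>B. h x y * h (Suc x) y)"
    unfolding g_def power_sum by (simp add: case_prod_beta prod.distrib)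
  finally have W: "Wt q s u k P = c1 ^ (\<Sum>(x,y)\<in>B. v x (Suc y)) * c2 ^ (\<Sum>(x,y)\<in>B. v x y)
      * c3 ^ (\<Sum>(x,y)\<in>B. h x y * h (Suc x) y)" .
  have sumB: "(\<Sum>(x,y)\<in>B. f x y) = (\<Sum>y\<in>{1..k}. \<Sum>x<N. f x y)" for f :: "nat \<Rightarrow> nat \<Rightarrow> nat"
    unfolding B_def sum.cartesian_product[symmetric] by (rule sum.swap)
  define V where "V y = (\<Sum>x<N. v x y)" for y
  define WV where "WV y = (\<Sum>x<N. x * v x y)" for y
  define Hp where "Hp y = (\<Sum>x<N. h (Suc x) y)" for y
  have rowV: "V (Suc y) = Suc (V y)" and rowW: "WV (Suc y) = WV y + Hp y" if y: "y \<in> {1..k}" for y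
  proof -
    have Hs: "(\<Sum>x<N. h x y) = 1 + Hp y"
    proof -
      have "(\<Sum>x<Suc N. h x y) = h 0 y + Hp y" unfolding Hp_def by (rule sum.lessThan_Suc_shift)
      moreover have "(\<Sum>x<Suc N. h x y) = (\<Sum>x<N. h x y)" using hN[OF y, of N] by simp
      ultimately show ?thesis using h0[OF y] by simp
    qed
    have WHs: "(\<Sum>x<N. x * h x y) = (\<Sum>x<N. x * h (Suc x) y) + Hp y"
    proof -
      have "(\<Sum>x<Suc N. x * h x y) = 0 * h 0 y + (\<Sum>x<N. Suc x * h (Suc x) y)"
        by (rule sum.lessThan_Suc_shift)
      also have "\<dots> = (\<Sum>x<N. x * h (Suc x) y) + Hp y" unfolding Hp_def by (simp add: sum.distrib)
      finally have "(\<Sum>x<Suc N. x * h x y) = (\<Sum>x<N. x * h (Suc x) y) + Hp y" .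
      moreover have "(\<Sum>x<Suc N. x * h x y) = (\<Sum>x<N. x * h x y)" using hN[OF y, of N] by simp
      ultimately show ?thesis by simp
    qed
    have "(\<Sum>x<N. v x y + h x y) = (\<Sum>x<N. v x (Suc y) + h (Suc x) y)"
      using cons[OF y] by simp
    thus "V (Suc y) = Suc (V y)" unfolding V_def sum.distrib Hs Hp_def[symmetric] by simp
    have "(\<Sum>x<N. x * (v x y + h x y)) = (\<Sum>x<N. x * (v x (Suc y) + h (Suc x) y))"
      using cons[OF y] by simp
    thus "WV (Suc y) = WV y + Hp y"
      unfolding WV_def distrib_left sum.distrib WHs by simp
  qed
  have V1: "V 1 = 0" "WV 1 = 0" unfolding V_def WV_def using v1 by auto
  have ind: "j \<le> k \<Longrightarrow> V (Suc j) = j \<and> WV (Suc j) = (\<Sum>y\<in>{1..j}. Hp y)" for j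
  proof (induction j)
    case 0 thus ?case using V1 by simp
  next
    case (Suc j)
    hence "Suc j \<in> {1..k}" by auto
    thus ?case using Suc rowV[of "Suc j"] rowW[of "Suc j"] by simp
  qed
  have A: "(\<Sum>(x,y)\<in>B. v x (Suc y)) = Suc k choose 2"
  proof -
    have "(\<Sum>(x,y)\<in>B. v x (Suc y)) = (\<Sum>y\<in>{1..k}. V (Suc y))" unfolding sumB V_def ..
    also have "\<dots> = (\<Sum>y\<in>{1..k}. y)" by (rule sum.cong) (use ind in auto)
    finally show ?thesis using tri1 by simp
  qed
  have B2: "(\<Sum>(x,y)\<in>B. v x y) = k choose 2"
  proof -
    have "(\<Sum>(x,y)\<in>B. v x y) = (\<Sum>y\<in>{1..k}. V y)" unfolding sumB V_def ..
    also have "\<dots> = (\<Sum>y\<in>{1..k}. y - 1)"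
    proof (rule sum.cong)
      fix y assume "y \<in> {1..k}"
      then obtain j where "y = Suc j" "j \<le> k" by (cases y) auto
      thus "V y = y - 1" using ind by simp
    qed simp
    finally show ?thesis using tri2 by simp
  qed
  have Hsum: "(\<Sum>(x,y)\<in>B. h (Suc x) y) = sum_list lam"
  proof -
    have "(\<Sum>(x,y)\<in>B. h (Suc x) y) = (\<Sum>y\<in>{1..k}. Hp y)" unfolding sumB Hp_def ..
    also have "\<dots> = WV (Suc k)" using ind by simp
    also have "\<dots> = sum_list lam" unfolding WV_def vtop
      by (rule lam_sum[OF len]) (use N in auto)
    finally show ?thesis .
  qed
  have C: "(\<Sum>(x,y)\<in>B. h (Suc x) y) = (\<Sum>(x,y)\<in>B. h x y * h (Suc x) y) + (\<Sum>(x,y)\<in>B. v x y)"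
  proof -
    have "(\<Sum>(x,y)\<in>B. h (Suc x) y) = (\<Sum>(x,y)\<in>B. h x y * h (Suc x) y + v x y)"
    proof (rule sum.cong[OF refl])
      fix p assume "p \<in> B"
      then obtain x y where p: "p = (x, y)" "y \<in> {1..k}" unfolding B_def by auto
      show "(case p of (x, y) \<Rightarrow> h (Suc x) y) = (case p of (x, y) \<Rightarrow> h x y * h (Suc x) y + v x y)"
        unfolding p(1) prod.case by (rule hsplit[OF p(2)])
    qed
    also have "\<dots> = (\<Sum>(x,y)\<in>B. h x y * h (Suc x) y) + (\<Sum>(x,y)\<in>B. v x y)"
      by (simp add: sum.distrib split_def)
    finally show ?thesis .
  qed
  have Ceq: "(\<Sum>(x,y)\<in>B. h x y * h (Suc x) y) = sum_list lam - (k choose 2)"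
    and le: "k choose 2 \<le> sum_list lam"
    using C Hsum B2 by arith+
  have ie: "int (sum_list lam) - int (k choose 2) = int (sum_list lam - (k choose 2))" using le by simp
  show ?thesis unfolding W A B2 Ceq c1_def[symmetric] c2_def[symmetric] c3_def[symmetric] ie
      power_int_of_nat ..
qed

end
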